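(* Let $D_8=\langle a,b\mid a^4=b^2=1,\ b^{-1}ab=a^{-1}\rangle$ be the dihedral group of order 8. The following d-identities form a basis of d-identities of $D_8$ (i.e. they all hold in $D_8$, and every group satisfying all of them is isomorphic to a section of $D_8$): (1) $\omega_8=\bigvee_{0\le i<j\le 8}(x_i=x_j)$; (2) $x^4=1$; (3) $(x_1^2=1)\vee(x_2^2=1)\vee(x_3^2=1)\vee(x_1=x_2)\vee(x_1=x_3)\vee(x_2=x_3)$; (4) $\Big[\bigvee_{i\ne j}x_i\in\langle x_j\rangle\Big]\vee\Big[\bigvee_{\sigma\in S_3}x_{\sigma(1)}\in\langle x_{\sigma(2)}x_{\sigma(3)}\rangle\Big]\vee\Big[\bigvee_{\sigma\in S_3}x_{\sigma(1)}x_{\sigma(2)}\in\langle x_{\sigma(2)}x_{\sigma(3)}\rangle\Big]$, with $i,j\in\{1,2,3\}$.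
   Context: A d-identity (disjunctive identity) is a universally quantified formula $\forall x_1\dots x_k\,[(f_1=1)\vee\dots\vee(f_n=1)]$ with the $f_i$ words in the free group on the variables; $u=v$ abbreviates $uv^{-1}=1$. A group satisfies it if it is true for all assignments. For a group $G$, $\mathrm{dvar}(G)$ is the class of groups satisfying every d-identity satisfied by $G$; for finite $G$ it is the class of groups isomorphic to sections (quotients of subgroups) of $G$. A set of d-identities is a basis of d-identities of $G$ if all its members hold in $G$ and every group satisfying them lies in $\mathrm{dvar}(G)$. Notation: "$u\in\langle v\rangle$" abbreviates $(u=1)\vee(u=v)\vee(u=v^2)\vee(u=v^3)$. *)

theory Defs
  imports "HOL-Algebra.Algebra" "HOL-Combinatorics.Permutations"
begin

text \<open>Concrete model of the dihedral group of order 8: the element (i,e) stands for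
  a^i b^e with 0 <= i < 4, 0 <= e < 2, so a = (1,0), b = (0,1).\<close>
definition D8 :: "(nat \<times> nat) monoid" where
  "D8 = \<lparr> carrier = {(i, e). i < 4 \<and> e < 2},
          monoid.mult = (\<lambda>(i, e) (j, f). ((i + (if e = 0 then j else 4 - j)) mod 4, (e + f) mod 2)),
          one = (0, 0) \<rparr>"

definition in_cyc :: "('a, 'b) monoid_scheme \<Rightarrow> 'a \<Rightarrow> 'a \<Rightarrow> bool" where
  "in_cyc G u v \<longleftrightarrow> u = \<one>\<^bsub>G\<^esub> \<or> u = v \<or> u = v [^]\<^bsub>G\<^esub> (2::nat) \<or> u = v [^]\<^bsub>G\<^esub> (3::nat)"

definition sat_d1 :: "('a, 'b) monoid_scheme \<Rightarrow> bool" where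
  "sat_d1 G \<longleftrightarrow> (\<forall>x :: nat \<Rightarrow> 'a. (\<forall>i\<le>8. x i \<in> carrier G) \<longrightarrow>
      (\<exists>i j. i < j \<and> j \<le> 8 \<and> x i = x j))"

definition sat_d2 :: "('a, 'b) monoid_scheme \<Rightarrow> bool" where
  "sat_d2 G \<longleftrightarrow> (\<forall>x\<in>carrier G. x [^]\<^bsub>G\<^esub> (4::nat) = \<one>\<^bsub>G\<^esub>)"

definition sat_d3 :: "('a, 'b) monoid_scheme \<Rightarrow> bool" where
  "sat_d3 G \<longleftrightarrow> (\<forall>x1\<in>carrier G. \<forall>x2\<in>carrier G. \<forall>x3\<in>carrier G.
      x1 [^]\<^bsub>G\<^esub> (2::nat) = \<one>\<^bsub>G\<^esub> \<or> x2 [^]\<^bsub>G\<^esub> (2::nat) = \<one>\<^bsub>G\<^esub> \<or>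
      x3 [^]\<^bsub>G\<^esub> (2::nat) = \<one>\<^bsub>G\<^esub> \<or> x1 = x2 \<or> x1 = x3 \<or> x2 = x3)"

definition sat_d4 :: "('a, 'b) monoid_scheme \<Rightarrow> bool" where
  "sat_d4 G \<longleftrightarrow> (\<forall>x :: nat \<Rightarrow> 'a. (\<forall>i\<in>{1,2,3}. x i \<in> carrier G) \<longrightarrow>
      (\<exists>i\<in>{1,2,3}. \<exists>j\<in>{1,2,3}. i \<noteq> j \<and> in_cyc G (x i) (x j))
    \<or> (\<exists>\<sigma>. \<sigma> permutes {1,2,3::nat} \<and>
          in_cyc G (x (\<sigma> 1)) (x (\<sigma> 2) \<otimes>\<^bsub>G\<^esub> x (\<sigma> 3)))
    \<or> (\<exists>\<sigma>. \<sigma> permutes {1,2,3::nat} \<and>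
          in_cyc G (x (\<sigma> 1) \<otimes>\<^bsub>G\<^esub> x (\<sigma> 2)) (x (\<sigma> 2) \<otimes>\<^bsub>G\<^esub> x (\<sigma> 3))))"

definition sat_basis :: "('a, 'b) monoid_scheme \<Rightarrow> bool" where
  "sat_basis G \<longleftrightarrow> sat_d1 G \<and> sat_d2 G \<and> sat_d3 G \<and> sat_d4 G"

definition is_section_of :: "('a, 'c) monoid_scheme \<Rightarrow> ('b, 'd) monoid_scheme \<Rightarrow> bool" where
  "is_section_of G H \<longleftrightarrow> (\<exists>K N. subgroup K H \<and> normal N (H\<lparr>carrier := K\<rparr>) \<and>
      G \<cong> (H\<lparr>carrier := K\<rparr> Mod N))"

end

theory Submission
  imports Defs
begin

definition m8 :: "nat \<times> nat \<Rightarrow> nat \<times> nat \<Rightarrow> nat \<times> nat" where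
  "m8 x y = (case x of (i, e) \<Rightarrow> case y of (j, f) \<Rightarrow> ((i + (if e = 0 then j else 4 - j)) mod 4, (e + f) mod 2))"

lemma m8_tab: "m8 (0,0) (0,0) = (0,0)"
  "m8 (0,0) (Suc 0,0) = (Suc 0,0)"
  "m8 (0,0) (2,0) = (2,0)"
  "m8 (0,0) (3,0) = (3,0)"
  "m8 (0,0) (0,Suc 0) = (0,Suc 0)"
  "m8 (0,0) (Suc 0,Suc 0) = (Suc 0,Suc 0)"
  "m8 (0,0) (2,Suc 0) = (2,Suc 0)"
  "m8 (0,0) (3,Suc 0) = (3,Suc 0)"
  "m8 (Suc 0,0) (0,0) = (Suc 0,0)"
  "m8 (Suc 0,0) (Suc 0,0) = (2,0)"
  "m8 (Suc 0,0) (2,0) = (3,0)"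
  "m8 (Suc 0,0) (3,0) = (0,0)"
  "m8 (Suc 0,0) (0,Suc 0) = (Suc 0,Suc 0)"
  "m8 (Suc 0,0) (Suc 0,Suc 0) = (2,Suc 0)"
  "m8 (Suc 0,0) (2,Suc 0) = (3,Suc 0)"
  "m8 (Suc 0,0) (3,Suc 0) = (0,Suc 0)"
  "m8 (2,0) (0,0) = (2,0)"
  "m8 (2,0) (Suc 0,0) = (3,0)"
  "m8 (2,0) (2,0) = (0,0)"
  "m8 (2,0) (3,0) = (Suc 0,0)"
  "m8 (2,0) (0,Suc 0) = (2,Suc 0)"
  "m8 (2,0) (Suc 0,Suc 0) = (3,Suc 0)"
  "m8 (2,0) (2,Suc 0) = (0,Suc 0)"
  "m8 (2,0) (3,Suc 0) = (Suc 0,Suc 0)"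
  "m8 (3,0) (0,0) = (3,0)"
  "m8 (3,0) (Suc 0,0) = (0,0)"
  "m8 (3,0) (2,0) = (Suc 0,0)"
  "m8 (3,0) (3,0) = (2,0)"
  "m8 (3,0) (0,Suc 0) = (3,Suc 0)"
  "m8 (3,0) (Suc 0,Suc 0) = (0,Suc 0)"
  "m8 (3,0) (2,Suc 0) = (Suc 0,Suc 0)"
  "m8 (3,0) (3,Suc 0) = (2,Suc 0)"
  "m8 (0,Suc 0) (0,0) = (0,Suc 0)"
  "m8 (0,Suc 0) (Suc 0,0) = (3,Suc 0)"
  "m8 (0,Suc 0) (2,0) = (2,Suc 0)"
  "m8 (0,Suc 0) (3,0) = (Suc 0,Suc 0)"
  "m8 (0,Suc 0) (0,Suc 0) = (0,0)"
  "m8 (0,Suc 0) (Suc 0,Suc 0) = (3,0)"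
  "m8 (0,Suc 0) (2,Suc 0) = (2,0)"
  "m8 (0,Suc 0) (3,Suc 0) = (Suc 0,0)"
  "m8 (Suc 0,Suc 0) (0,0) = (Suc 0,Suc 0)"
  "m8 (Suc 0,Suc 0) (Suc 0,0) = (0,Suc 0)"
  "m8 (Suc 0,Suc 0) (2,0) = (3,Suc 0)"
  "m8 (Suc 0,Suc 0) (3,0) = (2,Suc 0)"
  "m8 (Suc 0,Suc 0) (0,Suc 0) = (Suc 0,0)"
  "m8 (Suc 0,Suc 0) (Suc 0,Suc 0) = (0,0)"
  "m8 (Suc 0,Suc 0) (2,Suc 0) = (3,0)"
  "m8 (Suc 0,Suc 0) (3,Suc 0) = (2,0)"
  "m8 (2,Suc 0) (0,0) = (2,Suc 0)"
  "m8 (2,Suc 0) (Suc 0,0) = (Suc 0,Suc 0)"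
  "m8 (2,Suc 0) (2,0) = (0,Suc 0)"
  "m8 (2,Suc 0) (3,0) = (3,Suc 0)"
  "m8 (2,Suc 0) (0,Suc 0) = (2,0)"
  "m8 (2,Suc 0) (Suc 0,Suc 0) = (Suc 0,0)"
  "m8 (2,Suc 0) (2,Suc 0) = (0,0)"
  "m8 (2,Suc 0) (3,Suc 0) = (3,0)"
  "m8 (3,Suc 0) (0,0) = (3,Suc 0)"
  "m8 (3,Suc 0) (Suc 0,0) = (2,Suc 0)"
  "m8 (3,Suc 0) (2,0) = (Suc 0,Suc 0)"
  "m8 (3,Suc 0) (3,0) = (0,Suc 0)"
  "m8 (3,Suc 0) (0,Suc 0) = (3,0)"
  "m8 (3,Suc 0) (Suc 0,Suc 0) = (2,0)"
  "m8 (3,Suc 0) (2,Suc 0) = (Suc 0,0)"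
  "m8 (3,Suc 0) (3,Suc 0) = (0,0)"
  by (simp_all add: m8_def)

lemma carrier_D8: "carrier D8 = {(0,0),(Suc 0,0),(2,0),(3,0),(0,Suc 0),(Suc 0,Suc 0),(2,Suc 0),(3,Suc 0)}"
proof -
  have l4: "(i::nat) < 4 \<longleftrightarrow> i = 0 \<or> i = Suc 0 \<or> i = 2 \<or> i = 3" for i by arith
  have l2: "(e::nat) < 2 \<longleftrightarrow> e = 0 \<or> e = Suc 0" for e by arith
  show ?thesis unfolding D8_def by (auto simp only: l4 l2 partial_object.simps mem_Collect_eq case_prod_conv)
qed

lemma carrier_D8': "carrier D8 = {(i, e). i < 4 \<and> e < 2}"
  by (simp add: D8_def)

lemma m8_eq: "x \<otimes>\<^bsub>D8\<^esub> y = m8 x y"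
  by (cases x; cases y) (simp add: m8_def D8_def)

lemma mult_D8: "(i, e) \<otimes>\<^bsub>D8\<^esub> (j, f) = ((i + (if e = 0 then j else 4 - j)) mod 4, (e + f) mod 2)"
  by (simp add: D8_def)

lemma one_D8 [simp]: "\<one>\<^bsub>D8\<^esub> = (0,0)" by (simp add: D8_def)

lemma assoc8: "\<forall>x\<in>{(0,0),(Suc 0,0),(2,0),(3,0),(0,Suc 0),(Suc 0,Suc 0),(2,Suc 0),(3,Suc 0)}. \<forall>y\<in>{(0,0),(Suc 0,0),(2,0),(3,0),(0,Suc 0),(Suc 0,Suc 0),(2,Suc 0),(3,Suc 0)}. \<forall>z\<in>{(0,0),(Suc 0,0),(2,0),(3,0),(0,Suc 0),(Suc 0,Suc 0),(2,Suc 0),(3,Suc 0)}. m8 (m8 x y) z = m8 x (m8 y z)"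
  by (simp add: m8_tab)

lemma group_D8: "group D8"
proof (rule groupI)
  show "\<And>x y. x \<in> carrier D8 \<Longrightarrow> y \<in> carrier D8 \<Longrightarrow> x \<otimes>\<^bsub>D8\<^esub> y \<in> carrier D8"
    unfolding carrier_D8 m8_eq by (auto simp: m8_tab)
  show "\<one>\<^bsub>D8\<^esub> \<in> carrier D8" unfolding carrier_D8 by auto
  show "\<And>x y z. x \<in> carrier D8 \<Longrightarrow> y \<in> carrier D8 \<Longrightarrow> z \<in> carrier D8 \<Longrightarrow> x \<otimes>\<^bsub>D8\<^esub> y \<otimes>\<^bsub>D8\<^esub> z = x \<otimes>\<^bsub>D8\<^esub> (y \<otimes>\<^bsub>D8\<^esub> z)"
    unfolding carrier_D8 m8_eq using assoc8 by blast
  show "\<And>x. x \<in> carrier D8 \<Longrightarrow> \<one>\<^bsub>D8\<^esub> \<otimes>\<^bsub>D8\<^esub> x = x"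
    unfolding carrier_D8 m8_eq by (auto simp: m8_tab)
  show "\<And>x. x \<in> carrier D8 \<Longrightarrow> \<exists>y\<in>carrier D8. y \<otimes>\<^bsub>D8\<^esub> x = \<one>\<^bsub>D8\<^esub>"
    unfolding carrier_D8 m8_eq by (auto simp: m8_tab)
qed


lemma pow4_D8: "x [^]\<^bsub>D8\<^esub> (4::nat) = m8 (m8 (m8 (m8 (0,0) x) x) x) x"
  by (simp add: numeral_eq_Suc m8_eq)

lemma pow2_D8: "x [^]\<^bsub>D8\<^esub> (2::nat) = m8 (m8 (0,0) x) x"
  by (simp add: numeral_eq_Suc m8_eq)

lemma sat_d1_D8: "sat_d1 D8"
  unfolding sat_d1_def
proof (intro allI impI)
  fix x :: "nat \<Rightarrow> nat \<times> nat"
  assume x: "\<forall>i\<le>8. x i \<in> carrier D8"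
  have sub: "x ` {..8} \<subseteq> carrier D8" using x by auto
  have "card (carrier D8) = 8" unfolding carrier_D8 by simp
  have "\<not> inj_on x {..8}"
  proof
    assume "inj_on x {..8}"
    then have "card (x ` {..8}) = 9" by (simp add: card_image)
    moreover have "card (x ` {..8}) \<le> 8"
      using card_mono[OF _ sub] \<open>card (carrier D8) = 8\<close> by (simp add: carrier_D8)
    ultimately show False by simp
  qed
  then obtain i j where ij: "i \<le> 8" "j \<le> 8" "i \<noteq> j" "x i = x j"
    unfolding inj_on_def by auto
  show "\<exists>i j. i < j \<and> j \<le> 8 \<and> x i = x j"
  proof (cases "i < j")
    case True then show ?thesis using ij by blast
  next
    case False then show ?thesis using ij by (intro exI[of _ j] exI[of _ i]) auto
  qed
qed

lemma sat_d2_D8: "sat_d2 D8"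
  unfolding sat_d2_def carrier_D8 pow4_D8 by (simp add: m8_tab)

lemma sq_D8: "x \<in> carrier D8 \<Longrightarrow> m8 (m8 (0,0) x) x = (0,0) \<or> x = (Suc 0,0) \<or> x = (3,0)"
  unfolding carrier_D8 by (auto simp: m8_tab)

lemma sat_d3_D8: "sat_d3 D8"
  unfolding sat_d3_def pow2_D8 one_D8
  using sq_D8 by metis

lemma cyc_D8: "in_cyc D8 u v \<longleftrightarrow> u = (0,0) \<or> u = v \<or> u = (0,0) \<otimes>\<^bsub>D8\<^esub> v \<otimes>\<^bsub>D8\<^esub> v \<or> u = (0,0) \<otimes>\<^bsub>D8\<^esub> v \<otimes>\<^bsub>D8\<^esub> v \<otimes>\<^bsub>D8\<^esub> v"
  unfolding in_cyc_def by (simp add: numeral_eq_Suc)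

definition cyc8 :: "nat \<times> nat \<Rightarrow> nat \<times> nat \<Rightarrow> bool" where
  "cyc8 u v \<longleftrightarrow> u = (0,0) \<or> u = v \<or> u = m8 (m8 (0,0) v) v \<or> u = m8 (m8 (m8 (0,0) v) v) v"

lemma cyc8_eq: "in_cyc D8 u v = cyc8 u v"
  unfolding cyc_D8 cyc8_def m8_eq ..

definition L8 :: "(nat \<times> nat) list" where
  "L8 = [(0,0),(1,0),(2,0),(3,0),(0,1),(1,1),(2,1),(3,1)]"

lemma cyc8_tab: "cyc8 (0,0) (0,0)"
  "cyc8 (0,0) (Suc 0,0)"
  "cyc8 (0,0) (2,0)"
  "cyc8 (0,0) (3,0)"
  "cyc8 (0,0) (0,Suc 0)"
  "cyc8 (0,0) (Suc 0,Suc 0)"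
  "cyc8 (0,0) (2,Suc 0)"
  "cyc8 (0,0) (3,Suc 0)"
  "\<not> cyc8 (Suc 0,0) (0,0)"
  "cyc8 (Suc 0,0) (Suc 0,0)"
  "\<not> cyc8 (Suc 0,0) (2,0)"
  "cyc8 (Suc 0,0) (3,0)"
  "\<not> cyc8 (Suc 0,0) (0,Suc 0)"
  "\<not> cyc8 (Suc 0,0) (Suc 0,Suc 0)"
  "\<not> cyc8 (Suc 0,0) (2,Suc 0)"
  "\<not> cyc8 (Suc 0,0) (3,Suc 0)"
  "\<not> cyc8 (2,0) (0,0)"
  "cyc8 (2,0) (Suc 0,0)"
  "cyc8 (2,0) (2,0)"
  "cyc8 (2,0) (3,0)"
  "\<not> cyc8 (2,0) (0,Suc 0)"
  "\<not> cyc8 (2,0) (Suc 0,Suc 0)"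
  "\<not> cyc8 (2,0) (2,Suc 0)"
  "\<not> cyc8 (2,0) (3,Suc 0)"
  "\<not> cyc8 (3,0) (0,0)"
  "cyc8 (3,0) (Suc 0,0)"
  "\<not> cyc8 (3,0) (2,0)"
  "cyc8 (3,0) (3,0)"
  "\<not> cyc8 (3,0) (0,Suc 0)"
  "\<not> cyc8 (3,0) (Suc 0,Suc 0)"
  "\<not> cyc8 (3,0) (2,Suc 0)"
  "\<not> cyc8 (3,0) (3,Suc 0)"
  "\<not> cyc8 (0,Suc 0) (0,0)"
  "\<not> cyc8 (0,Suc 0) (Suc 0,0)"
  "\<not> cyc8 (0,Suc 0) (2,0)"
  "\<not> cyc8 (0,Suc 0) (3,0)"
  "cyc8 (0,Suc 0) (0,Suc 0)"
  "\<not> cyc8 (0,Suc 0) (Suc 0,Suc 0)"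
  "\<not> cyc8 (0,Suc 0) (2,Suc 0)"
  "\<not> cyc8 (0,Suc 0) (3,Suc 0)"
  "\<not> cyc8 (Suc 0,Suc 0) (0,0)"
  "\<not> cyc8 (Suc 0,Suc 0) (Suc 0,0)"
  "\<not> cyc8 (Suc 0,Suc 0) (2,0)"
  "\<not> cyc8 (Suc 0,Suc 0) (3,0)"
  "\<not> cyc8 (Suc 0,Suc 0) (0,Suc 0)"
  "cyc8 (Suc 0,Suc 0) (Suc 0,Suc 0)"
  "\<not> cyc8 (Suc 0,Suc 0) (2,Suc 0)"
  "\<not> cyc8 (Suc 0,Suc 0) (3,Suc 0)"
  "\<not> cyc8 (2,Suc 0) (0,0)"
  "\<not> cyc8 (2,Suc 0) (Suc 0,0)"
  "\<not> cyc8 (2,Suc 0) (2,0)"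
  "\<not> cyc8 (2,Suc 0) (3,0)"
  "\<not> cyc8 (2,Suc 0) (0,Suc 0)"
  "\<not> cyc8 (2,Suc 0) (Suc 0,Suc 0)"
  "cyc8 (2,Suc 0) (2,Suc 0)"
  "\<not> cyc8 (2,Suc 0) (3,Suc 0)"
  "\<not> cyc8 (3,Suc 0) (0,0)"
  "\<not> cyc8 (3,Suc 0) (Suc 0,0)"
  "\<not> cyc8 (3,Suc 0) (2,0)"
  "\<not> cyc8 (3,Suc 0) (3,0)"
  "\<not> cyc8 (3,Suc 0) (0,Suc 0)"
  "\<not> cyc8 (3,Suc 0) (Suc 0,Suc 0)"
  "\<not> cyc8 (3,Suc 0) (2,Suc 0)"
  "cyc8 (3,Suc 0) (3,Suc 0)"
  by (simp_all add: cyc8_def m8_tab)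

definition B8 where "B8 u v w \<longleftrightarrow> cyc8 u v \<or>
     cyc8 u w \<or>
     cyc8 v u \<or>
     cyc8 v w \<or>
     cyc8 w u \<or>
     cyc8 w v \<or>
     cyc8 u (m8 v w) \<or>
     cyc8 u (m8 w v) \<or>
     cyc8 v (m8 u w) \<or>
     cyc8 v (m8 w u) \<or>
     cyc8 w (m8 u v) \<or>
     cyc8 w (m8 v u) \<or>
     cyc8 (m8 u v) (m8 v w) \<or>
     cyc8 (m8 u w) (m8 w v) \<or>
     cyc8 (m8 v u) (m8 u w) \<or>
     cyc8 (m8 v w) (m8 w u) \<or>
     cyc8 (m8 w u) (m8 u v) \<or>
     cyc8 (m8 w v) (m8 v u)"

lemma table8_0: "\<forall>v\<in>set L8. \<forall>w\<in>set L8. B8 (0,0) v w"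
  unfolding L8_def by (simp add: B8_def m8_tab cyc8_tab)

lemma table8_1: "\<forall>v\<in>set L8. \<forall>w\<in>set L8. B8 (Suc 0,0) v w"
  unfolding L8_def by (simp add: B8_def m8_tab cyc8_tab)

lemma table8_2: "\<forall>v\<in>set L8. \<forall>w\<in>set L8. B8 (2,0) v w"
  unfolding L8_def by (simp add: B8_def m8_tab cyc8_tab)

lemma table8_3: "\<forall>v\<in>set L8. \<forall>w\<in>set L8. B8 (3,0) v w"
  unfolding L8_def by (simp add: B8_def m8_tab cyc8_tab)

lemma table8_4: "\<forall>v\<in>set L8. \<forall>w\<in>set L8. B8 (0,Suc 0) v w"
  unfolding L8_def by (simp add: B8_def m8_tab cyc8_tab)

lemma table8_5: "\<forall>v\<in>set L8. \<forall>w\<in>set L8. B8 (Suc 0,Suc 0) v w"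
  unfolding L8_def by (simp add: B8_def m8_tab cyc8_tab)

lemma table8_6: "\<forall>v\<in>set L8. \<forall>w\<in>set L8. B8 (2,Suc 0) v w"
  unfolding L8_def by (simp add: B8_def m8_tab cyc8_tab)

lemma table8_7: "\<forall>v\<in>set L8. \<forall>w\<in>set L8. B8 (3,Suc 0) v w"
  unfolding L8_def by (simp add: B8_def m8_tab cyc8_tab)

lemma table8_all: "\<forall>u\<in>set L8. \<forall>v\<in>set L8. \<forall>w\<in>set L8. B8 u v w"
proof
  fix u assume "u \<in> set L8"
  then have "u = (0,0) \<or> u = (Suc 0,0) \<or> u = (2,0) \<or> u = (3,0) \<or> u = (0,Suc 0) \<or> u = (Suc 0,Suc 0) \<or> u = (2,Suc 0) \<or> u = (3,Suc 0)"
    by (simp add: L8_def)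
  then show "\<forall>v\<in>set L8. \<forall>w\<in>set L8. B8 u v w"
    using table8_0 table8_1 table8_2 table8_3 table8_4 table8_5 table8_6 table8_7 by blast
qed

lemma table_D8: "u \<in> carrier D8 \<Longrightarrow> v \<in> carrier D8 \<Longrightarrow> w \<in> carrier D8 \<Longrightarrow> B8 u v w"
proof -
  have "carrier D8 = set L8" unfolding carrier_D8 L8_def by simp
  then show "u \<in> carrier D8 \<Longrightarrow> v \<in> carrier D8 \<Longrightarrow> w \<in> carrier D8 \<Longrightarrow> B8 u v w"
    using table8_all by blast
qed

lemma perm_ex:
  assumes "p \<in> {1,2,3}" "q \<in> {1,2,3}" "r \<in> {1,2,3}" "p \<noteq> q" "p \<noteq> r" "q \<noteq> r"
  shows "\<exists>\<sigma>. \<sigma> permutes {1,2,3::nat} \<and> \<sigma> 1 = p \<and> \<sigma> 2 = q \<and> \<sigma> 3 = r"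
proof (intro exI conjI)
  let ?s = "\<lambda>n::nat. if n = 1 then p else if n = 2 then q else if n = 3 then r else n"
  have inj: "inj_on ?s {1,2,3}" using assms by (auto simp: inj_on_def)
  have sub: "?s ` {1,2,3} \<subseteq> {1,2,3}" using assms by auto
  have "?s ` {1,2,3} = {1,2,3}" by (rule endo_inj_surj) (use inj sub in simp_all)
  then have "bij_betw ?s {1,2,3} {1,2,3}" using inj by (simp add: bij_betw_def)
  then show "?s permutes {1,2,3}" by (rule bij_imp_permutes) auto
qed auto

lemma sat_d4_D8: "sat_d4 D8"
  unfolding sat_d4_def
proof (intro allI impI)
  fix x :: "nat \<Rightarrow> nat \<times> nat"
  assume x: "\<forall>i\<in>{1,2,3}. x i \<in> carrier D8"
  let ?P1 = "\<exists>i\<in>{1,2,3}. \<exists>j\<in>{1,2,3}. i \<noteq> j \<and> in_cyc D8 (x i) (x j)"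
  let ?P2 = "\<exists>\<sigma>. \<sigma> permutes {1,2,3::nat} \<and> in_cyc D8 (x (\<sigma> 1)) (x (\<sigma> 2) \<otimes>\<^bsub>D8\<^esub> x (\<sigma> 3))"
  let ?P3 = "\<exists>\<sigma>. \<sigma> permutes {1,2,3::nat} \<and> in_cyc D8 (x (\<sigma> 1) \<otimes>\<^bsub>D8\<^esub> x (\<sigma> 2)) (x (\<sigma> 2) \<otimes>\<^bsub>D8\<^esub> x (\<sigma> 3))"
  have h2: "?P2" if hp: "p \<in> {1,2,3}" "q \<in> {1,2,3}" "r \<in> {1,2,3}" "p \<noteq> q" "p \<noteq> r" "q \<noteq> r"
     "cyc8 (x p) (m8 (x q) (x r))" for p q r
  proof -
    obtain \<sigma> where s: "\<sigma> permutes {1,2,3::nat}" "\<sigma> 1 = p" "\<sigma> 2 = q" "\<sigma> 3 = r"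
      using perm_ex[OF hp(1-6)] by blast
    show ?thesis using s hp(7) by (intro exI[of _ \<sigma>]) (simp add: cyc8_eq m8_eq)
  qed
  have h3: "?P3" if hp: "p \<in> {1,2,3}" "q \<in> {1,2,3}" "r \<in> {1,2,3}" "p \<noteq> q" "p \<noteq> r" "q \<noteq> r"
     "cyc8 (m8 (x p) (x q)) (m8 (x q) (x r))" for p q r
  proof -
    obtain \<sigma> where s: "\<sigma> permutes {1,2,3::nat}" "\<sigma> 1 = p" "\<sigma> 2 = q" "\<sigma> 3 = r"
      using perm_ex[OF hp(1-6)] by blast
    show ?thesis using s hp(7) by (intro exI[of _ \<sigma>]) (simp add: cyc8_eq m8_eq)
  qed
  have h1: "?P1" if "p \<in> {1,2,3}" "q \<in> {1,2,3}" "p \<noteq> q" "cyc8 (x p) (x q)" for p q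
    using that unfolding cyc8_eq by blast
  have H0: "cyc8 (x 1) (x 2) \<Longrightarrow> ?P1" using h1[of 1 2] by simp
  have H1: "cyc8 (x 1) (x 3) \<Longrightarrow> ?P1" using h1[of 1 3] by simp
  have H2: "cyc8 (x 2) (x 1) \<Longrightarrow> ?P1" using h1[of 2 1] by simp
  have H3: "cyc8 (x 2) (x 3) \<Longrightarrow> ?P1" using h1[of 2 3] by simp
  have H4: "cyc8 (x 3) (x 1) \<Longrightarrow> ?P1" using h1[of 3 1] by simp
  have H5: "cyc8 (x 3) (x 2) \<Longrightarrow> ?P1" using h1[of 3 2] by simp
  have H6: "cyc8 (x 1) (m8 (x 2) (x 3)) \<Longrightarrow> ?P2" using h2[of 1 2 3] by simp
  have H7: "cyc8 (x 1) (m8 (x 3) (x 2)) \<Longrightarrow> ?P2" using h2[of 1 3 2] by simp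
  have H8: "cyc8 (x 2) (m8 (x 1) (x 3)) \<Longrightarrow> ?P2" using h2[of 2 1 3] by simp
  have H9: "cyc8 (x 2) (m8 (x 3) (x 1)) \<Longrightarrow> ?P2" using h2[of 2 3 1] by simp
  have H10: "cyc8 (x 3) (m8 (x 1) (x 2)) \<Longrightarrow> ?P2" using h2[of 3 1 2] by simp
  have H11: "cyc8 (x 3) (m8 (x 2) (x 1)) \<Longrightarrow> ?P2" using h2[of 3 2 1] by simp
  have H12: "cyc8 (m8 (x 1) (x 2)) (m8 (x 2) (x 3)) \<Longrightarrow> ?P3" using h3[of 1 2 3] by simp
  have H13: "cyc8 (m8 (x 1) (x 3)) (m8 (x 3) (x 2)) \<Longrightarrow> ?P3" using h3[of 1 3 2] by simp
  have H14: "cyc8 (m8 (x 2) (x 1)) (m8 (x 1) (x 3)) \<Longrightarrow> ?P3" using h3[of 2 1 3] by simp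
  have H15: "cyc8 (m8 (x 2) (x 3)) (m8 (x 3) (x 1)) \<Longrightarrow> ?P3" using h3[of 2 3 1] by simp
  have H16: "cyc8 (m8 (x 3) (x 1)) (m8 (x 1) (x 2)) \<Longrightarrow> ?P3" using h3[of 3 1 2] by simp
  have H17: "cyc8 (m8 (x 3) (x 2)) (m8 (x 2) (x 1)) \<Longrightarrow> ?P3" using h3[of 3 2 1] by simp
  have "B8 (x 1) (x 2) (x 3)" using table_D8 x by simp
  then show "?P1 \<or> ?P2 \<or> ?P3"
    unfolding B8_def using H0 H1 H2 H3 H4 H5 H6 H7 H8 H9 H10 H11 H12 H13 H14 H15 H16 H17 by blast
qed

lemma D8_part: "group D8 \<and> sat_basis D8"
  unfolding sat_basis_def using group_D8 sat_d1_D8 sat_d2_D8 sat_d3_D8 sat_d4_D8 by blast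


declare mult_D8 [simp]

lemma section_from_hom:
  assumes G: "group G" and K: "subgroup K D8"
    and h: "\<phi> \<in> hom (D8\<lparr>carrier := K\<rparr>) G" and surj: "\<phi> ` K = carrier G"
  shows "is_section_of G D8"
proof -
  let ?H = "D8\<lparr>carrier := K\<rparr>"
  have gH: "group ?H" using subgroup.subgroup_is_group[OF K group_D8] .
  have gh: "group_hom ?H G \<phi>" unfolding group_hom_def group_hom_axioms_def using gH G h by blast
  have N: "kernel ?H G \<phi> \<lhd> ?H" using group_hom.normal_kernel[OF gh] .
  have iso: "?H Mod kernel ?H G \<phi> \<cong> G" using group_hom.FactGroup_iso[OF gh] surj by simp
  have "group (?H Mod kernel ?H G \<phi>)" using normal.factorgroup_is_group[OF N] .
  then have "G \<cong> ?H Mod kernel ?H G \<phi>" using group.iso_sym iso by blast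
  then show ?thesis unfolding is_section_of_def using K N by blast
qed

lemma subgroup_K4: "subgroup {(i::nat, e::nat). i < 4 \<and> e = 0} D8"
proof (rule subgroup.intro)
  show "{(i::nat, e::nat). i < 4 \<and> e = 0} \<subseteq> carrier D8" by (auto simp: carrier_D8')
  show "\<And>x y. x \<in> {(i::nat, e::nat). i < 4 \<and> e = 0} \<Longrightarrow> y \<in> {(i::nat, e::nat). i < 4 \<and> e = 0} \<Longrightarrow>
     x \<otimes>\<^bsub>D8\<^esub> y \<in> {(i::nat, e::nat). i < 4 \<and> e = 0}" by auto
  show "\<one>\<^bsub>D8\<^esub> \<in> {(i::nat, e::nat). i < 4 \<and> e = 0}" by simp
  fix x assume x: "x \<in> {(i::nat, e::nat). i < 4 \<and> e = 0}"
  then obtain i where i: "x = (i, 0)" "i < 4" by auto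
  have "inv\<^bsub>D8\<^esub> x = ((4 - i) mod 4, 0)"
    by (rule group.inv_equality[OF group_D8]) (use i in \<open>auto simp: carrier_D8' mod_add_left_eq\<close>)
  then show "inv\<^bsub>D8\<^esub> x \<in> {(i::nat, e::nat). i < 4 \<and> e = 0}" by simp
qed

context group
begin

lemma pw2: "x \<in> carrier G \<Longrightarrow> x [^] (2::nat) = x \<otimes> x"
  by (simp add: numeral_eq_Suc)
lemma pw3: "x \<in> carrier G \<Longrightarrow> x [^] (3::nat) = x \<otimes> x \<otimes> x"
  by (simp add: numeral_eq_Suc)
lemma pw4: "x \<in> carrier G \<Longrightarrow> x [^] (4::nat) = x \<otimes> x \<otimes> x \<otimes> x"
  by (simp add: numeral_eq_Suc)

lemma pow4_mod:
  assumes x: "x \<in> carrier G" and h: "x [^] (4::nat) = \<one>"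
  shows "x [^] (n::nat) = x [^] (n mod 4)"
proof -
  have "n = 4 * (n div 4) + n mod 4" by simp
  then have "x [^] n = x [^] (4 * (n div 4) + n mod 4)" by (rule arg_cong)
  also have "\<dots> = (x [^] (4::nat)) [^] (n div 4) \<otimes> x [^] (n mod 4)"
    using x by (simp add: nat_pow_mult nat_pow_pow)
  also have "\<dots> = x [^] (n mod 4)" using h x by simp
  finally show ?thesis .
qed

lemma b_comm_pow:
  assumes a: "a \<in> carrier G" and b: "b \<in> carrier G" and rel: "b \<otimes> a = a [^] (3::nat) \<otimes> b"
  shows "b \<otimes> a [^] (j::nat) = a [^] (3 * j) \<otimes> b"
proof (induction j)
  case 0 then show ?case using b by simp
next
  case (Suc j)
  have "b \<otimes> a [^] Suc j = (b \<otimes> a [^] j) \<otimes> a" using a b by (simp add: m_assoc)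
  also have "\<dots> = a [^] (3 * j) \<otimes> (b \<otimes> a)" using Suc a b by (simp add: m_assoc)
  also have "\<dots> = (a [^] (3 * j) \<otimes> a [^] (3::nat)) \<otimes> b" using rel a b by (simp add: m_assoc)
  also have "\<dots> = a [^] (3 * Suc j) \<otimes> b" using a by (simp add: nat_pow_mult add.commute)
  finally show ?case .
qed

lemma phi_mult:
  assumes a: "a \<in> carrier G" and b: "b \<in> carrier G" and a4: "a [^] (4::nat) = \<one>" and bb: "b \<otimes> b = \<one>"
    and rel: "e = 0 \<or> b \<otimes> a = a [^] (3::nat) \<otimes> b"
    and ij: "i < (4::nat)" "j < (4::nat)" "e < (2::nat)" "f < (2::nat)"
  shows "a [^] ((i + (if e = 0 then j else 4 - j)) mod 4) \<otimes> b [^] ((e + f) mod 2)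
         = (a [^] i \<otimes> b [^] e) \<otimes> (a [^] j \<otimes> b [^] f)"
proof (cases "e = 0")
  case True
  have "(a [^] i \<otimes> b [^] e) \<otimes> (a [^] j \<otimes> b [^] f) = (a [^] i \<otimes> a [^] j) \<otimes> b [^] f"
    using True a b by (simp add: m_assoc)
  also have "\<dots> = a [^] (i + j) \<otimes> b [^] f" using a by (simp add: nat_pow_mult)
  also have "\<dots> = a [^] ((i + j) mod 4) \<otimes> b [^] f" using pow4_mod[OF a a4, of "i + j"] by simp
  finally show ?thesis using True ij by simp
next
  case False
  then have e: "e = 1" using ij by simp
  have r: "b \<otimes> a = a [^] (3::nat) \<otimes> b" using rel False by simp
  have "(a [^] i \<otimes> b [^] e) \<otimes> (a [^] j \<otimes> b [^] f) = a [^] i \<otimes> (b \<otimes> a [^] j) \<otimes> b [^] f"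
    using e a b by (simp add: m_assoc)
  also have "\<dots> = a [^] i \<otimes> (a [^] (3 * j) \<otimes> b) \<otimes> b [^] f" using b_comm_pow[OF a b r] by simp
  also have "\<dots> = a [^] (i + 3 * j) \<otimes> (b \<otimes> b [^] f)" using a b by (simp add: m_assoc nat_pow_mult[symmetric])
  also have "b \<otimes> b [^] f = b [^] ((e + f) mod 2)"
  proof -
    have "f = 0 \<or> f = 1" using ij by auto
    then show ?thesis using e b bb by (auto simp: nat_pow_def)
  qed
  also have "a [^] (i + 3 * j) = a [^] ((i + (if e = 0 then j else 4 - j)) mod 4)"
  proof -
    have "(i + (4 - j)) + 4 * j = (i + 3 * j) + 4" using ij by simp
    then have "(i + (4 - j) + 4 * j) mod 4 = (i + 3 * j + 4) mod 4" by (rule arg_cong)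
    then have "(i + (4 - j)) mod 4 = (i + 3 * j) mod 4" by simp
    then show ?thesis using pow4_mod[OF a a4, of "i + 3 * j"] e by simp
  qed
  finally show ?thesis by simp
qed

lemma phi_hom:
  assumes a: "a \<in> carrier G" and b: "b \<in> carrier G" and a4: "a [^] (4::nat) = \<one>" and bb: "b \<otimes> b = \<one>"
    and K: "K \<subseteq> carrier D8"
    and rel: "(\<forall>x\<in>K. snd x = 0) \<or> b \<otimes> a = a [^] (3::nat) \<otimes> b"
  shows "(\<lambda>(i, e). a [^] (i::nat) \<otimes> b [^] (e::nat)) \<in> hom (D8\<lparr>carrier := K\<rparr>) G"
  unfolding hom_def
proof (intro CollectI conjI ballI)
  show "(\<lambda>(i, e). a [^] (i::nat) \<otimes> b [^] (e::nat)) \<in> carrier (D8\<lparr>carrier := K\<rparr>) \<rightarrow> carrier G"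
    using a b by auto
  fix x y assume x: "x \<in> carrier (D8\<lparr>carrier := K\<rparr>)" and y: "y \<in> carrier (D8\<lparr>carrier := K\<rparr>)"
  obtain i e where xe: "x = (i, e)" by fastforce
  obtain j f where ye: "y = (j, f)" by fastforce
  have ie: "i < 4" "e < 2" using x K xe by (auto simp: carrier_D8')
  have jf: "j < 4" "f < 2" using y K ye by (auto simp: carrier_D8')
  have r: "e = 0 \<or> b \<otimes> a = a [^] (3::nat) \<otimes> b" using rel x xe by auto
  show "(\<lambda>(i, e). a [^] i \<otimes> b [^] e) (x \<otimes>\<^bsub>D8\<lparr>carrier := K\<rparr>\<^esub> y) =
        (\<lambda>(i, e). a [^] i \<otimes> b [^] e) x \<otimes> (\<lambda>(i, e). a [^] i \<otimes> b [^] e) y"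
    using phi_mult[OF a b a4 bb r ie(1) jf(1) ie(2) jf(2)] xe ye by simp
qed


lemma pow_inj4:
  assumes a: "a \<in> carrier G" and a2: "a \<otimes> a \<noteq> \<one>" and a4: "a \<otimes> a \<otimes> a \<otimes> a = \<one>"
    and ij: "i < (4::nat)" "j < (4::nat)" and eq: "a [^] i = a [^] j"
  shows "i = j"
proof -
  have n1: "a \<noteq> \<one>" using a2 a by auto
  have n3: "a \<otimes> a \<otimes> a \<noteq> \<one>" using a4 a n1 by auto
  have d12: "a \<noteq> a \<otimes> a" using a n1 by simp
  have d13: "a \<noteq> a \<otimes> a \<otimes> a" using a a2 by simp
  have d23: "a \<otimes> a \<noteq> a \<otimes> a \<otimes> a" using a n1 by simp
  have "i \<in> {0,1,2,3}" "j \<in> {0,1,2,3}" using ij by auto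
  then show ?thesis using eq n1 a2 n3 d12 d13 d23 a
    by (auto simp: numeral_eq_Suc)
qed

lemma cyc_inv:
  assumes sq: "\<forall>g\<in>carrier G. g \<otimes> g = \<one>" and v: "v \<in> carrier G"
  shows "in_cyc G u v \<longleftrightarrow> u = \<one> \<or> u = v"
proof -
  have "v [^] (2::nat) = \<one>" using pw2[OF v] sq v by simp
  moreover have "v [^] (3::nat) = v" using pw3[OF v] sq v by simp
  ultimately show ?thesis unfolding in_cyc_def by auto
qed

lemma lt_facts: "(0::nat) < 4" "(1::nat) < 4" "(0::nat) < 2" "(1::nat) < 2"
  by simp_all

lemma classify:
  assumes d1: "sat_d1 G" and d2: "sat_d2 G" and d3: "sat_d3 G" and d4: "sat_d4 G"
  shows "(\<exists>a\<in>carrier G. \<exists>b\<in>carrier G. a [^] (4::nat) = \<one> \<and> b \<otimes> b = \<one> \<and> b \<otimes> a = a [^] (3::nat) \<otimes> b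
            \<and> (\<forall>g\<in>carrier G. \<exists>i<(4::nat). \<exists>e<(2::nat). g = a [^] i \<otimes> b [^] e))
       \<or> (\<exists>a\<in>carrier G. a [^] (4::nat) = \<one> \<and> (\<forall>g\<in>carrier G. \<exists>i<(4::nat). g = a [^] i))"
proof -
  note lt = lt_facts
  have P4: "\<And>x. x \<in> carrier G \<Longrightarrow> x [^] (4::nat) = \<one>" using d2 unfolding sat_d2_def by blast
  show ?thesis
  proof (cases "\<exists>a\<in>carrier G. a \<otimes> a \<noteq> \<one>")
    case True
    then obtain a where a: "a \<in> carrier G" and a2: "a \<otimes> a \<noteq> \<one>" by blast
    have a4': "a [^] (4::nat) = \<one>" using P4 a by blast
    have a4: "a \<otimes> a \<otimes> a \<otimes> a = \<one>" using a4' pw4[OF a] by simp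
    have n1: "a \<noteq> \<one>" using a2 a by auto
    have a33: "(a \<otimes> a \<otimes> a) \<otimes> (a \<otimes> a \<otimes> a) \<noteq> \<one>"
    proof
      assume h: "(a \<otimes> a \<otimes> a) \<otimes> (a \<otimes> a \<otimes> a) = \<one>"
      have "(a \<otimes> a \<otimes> a) \<otimes> (a \<otimes> a \<otimes> a) = (a \<otimes> a \<otimes> a \<otimes> a) \<otimes> (a \<otimes> a)" using a by (simp add: m_assoc)
      then show False using h a4 a2 a by simp
    qed
    have d13: "a \<noteq> a \<otimes> a \<otimes> a" using a a2 by simp
    have sq: "g \<otimes> g = \<one>" if g: "g \<in> carrier G" "g \<noteq> a" "g \<noteq> a \<otimes> a \<otimes> a" for g
    proof -
      have c3: "a \<otimes> a \<otimes> a \<in> carrier G" using a by simp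
      have "a [^] (2::nat) = \<one> \<or> (a \<otimes> a \<otimes> a) [^] (2::nat) = \<one> \<or> g [^] (2::nat) = \<one> \<or>
            a = a \<otimes> a \<otimes> a \<or> a = g \<or> a \<otimes> a \<otimes> a = g"
        using d3 a c3 g(1) unfolding sat_d3_def by blast
      then show ?thesis using a2 a33 d13 g pw2[OF a] pw2[OF c3] pw2[OF g(1)] by auto
    qed
    show ?thesis
    proof (cases "\<forall>g\<in>carrier G. \<exists>i<(4::nat). g = a [^] i")
      case True
      then show ?thesis using a a4' by blast
    next
      case False
      then obtain b where b: "b \<in> carrier G" and bA: "\<And>i. i < (4::nat) \<Longrightarrow> b \<noteq> a [^] i" by blast
      have bA': "b \<noteq> \<one>" "b \<noteq> a" "b \<noteq> a \<otimes> a" "b \<noteq> a \<otimes> a \<otimes> a"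
        using bA[of 0] bA[of 1] bA[of 2] bA[of 3] a by (auto simp: numeral_eq_Suc)
      have bb: "b \<otimes> b = \<one>" using sq b bA' by blast
      have ba_c: "b \<otimes> a \<in> carrier G" using a b by simp
      have ba1: "b \<otimes> a \<noteq> a"
        using bA' a b by simp
      have ba3: "b \<otimes> a \<noteq> a \<otimes> a \<otimes> a"
        using bA' a b by simp
      have baba: "(b \<otimes> a) \<otimes> (b \<otimes> a) = \<one>" using sq[OF ba_c ba1 ba3] .
      have inva: "inv a = a \<otimes> a \<otimes> a"
        by (rule inv_equality) (use a a4 in \<open>simp_all add: m_assoc\<close>)
      have invb: "inv b = b" by (rule inv_equality) (use b bb in simp_all)
      have "inv (b \<otimes> a) = b \<otimes> a" by (rule inv_equality) (use baba a b in simp_all)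
      then have rel0: "b \<otimes> a = a \<otimes> a \<otimes> a \<otimes> b"
        using inv_mult_group[OF b a] inva invb by simp
      then have rel: "b \<otimes> a = a [^] (3::nat) \<otimes> b" using pw3[OF a] by simp
      have bpow: "b \<noteq> a [^] (k::nat) \<otimes> a [^] (i::nat)" for k i
      proof
        assume h: "b = a [^] k \<otimes> a [^] i"
        also have "\<dots> = a [^] (k + i)" using a by (simp add: nat_pow_mult)
        also have "\<dots> = a [^] ((k + i) mod 4)" using pow4_mod[OF a a4'] by blast
        finally show False using bA[of "(k + i) mod 4"] by simp
      qed
      have surj: "\<exists>i<(4::nat). \<exists>e<(2::nat). g = a [^] i \<otimes> b [^] e" if g: "g \<in> carrier G" for g
      proof (rule ccontr)
        assume ng: "\<not> ?thesis"
        have g1: "g \<noteq> a [^] i" if "i < (4::nat)" for i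
        proof
          assume "g = a [^] i"
          then have "g = a [^] i \<otimes> b [^] (0::nat)" using a by simp
          then show False using ng that by fastforce
        qed
        have g2: "g \<noteq> a [^] i \<otimes> b" if "i < (4::nat)" for i
        proof
          assume "g = a [^] i \<otimes> b"
          then have "g = a [^] i \<otimes> b [^] (1::nat)" using b by simp
          moreover have "(1::nat) < 2" by simp
          ultimately show False using ng that by blast
        qed
        define x where "x k = (if k < 4 then a [^] k else if k < 8 then a [^] (k - 4) \<otimes> b else g)" for k :: nat
        have xc: "\<forall>i\<le>8. x i \<in> carrier G" unfolding x_def using a b g by auto
        then obtain i j where ij: "i < j" "j \<le> 8" "x i = x j" using d1 unfolding sat_d1_def by blast
        show False
        proof (cases "j = 8")
          case True
          then have "x i = g" using ij x_def by simp
          show False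
          proof (cases "i < 4")
            case True
            then show False using g1[OF True] \<open>x i = g\<close> unfolding x_def by simp
          next
            case False
            then have "i - 4 < 4" "\<not> i < 4" "i < 8" using ij \<open>j = 8\<close> by auto
            then show False using g2[OF \<open>i - 4 < 4\<close>] \<open>x i = g\<close> unfolding x_def by simp
          qed
        next
          case False
          then have j8: "j < 8" using ij by simp
          show False
          proof (cases "j < 4")
            case True
            then have "a [^] i = a [^] j" using ij x_def by simp
            then show False using pow_inj4[OF a a2 a4, of i j] ij True by simp
          next
            case jge: False
            show False
            proof (cases "i < 4")
              case True
              then have "a [^] i = a [^] (j - 4) \<otimes> b" using ij x_def jge j8 by simp
              then have bi: "b = inv (a [^] (j - 4)) \<otimes> a [^] i" using a b by (simp add: m_assoc[symmetric])
              have "a [^] (4 - (j - 4)) \<otimes> a [^] (j - 4) = a [^] (4::nat)"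
                using a jge j8 by (simp add: nat_pow_mult)
              then have "inv (a [^] (j - 4)) = a [^] (4 - (j - 4))"
                using a a4' by (intro inv_equality) simp_all
              then show False using bi bpow[of "4 - (j - 4)" i] by simp
            next
              case ige: False
              then have "a [^] (i - 4) \<otimes> b = a [^] (j - 4) \<otimes> b" using ij x_def jge j8 by simp
              then have "a [^] (i - 4) = a [^] (j - 4)" using a b by simp
              then have "i - 4 = j - 4" using pow_inj4[OF a a2 a4, of "i - 4" "j - 4"] ij ige j8 by simp
              then show False using ij ige jge by simp
            qed
          qed
        qed
      qed
      show ?thesis using a b a4' bb rel surj by blast
    qed
  next
    case False
    then have sq: "\<forall>g\<in>carrier G. g \<otimes> g = \<one>" by blast
    have invs: "inv x = x" if "x \<in> carrier G" for x
      by (rule inv_equality) (use sq that in auto)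
    have comm: "x \<otimes> y = y \<otimes> x" if xy: "x \<in> carrier G" "y \<in> carrier G" for x y
    proof -
      have "x \<otimes> y = inv (x \<otimes> y)" using invs[of "x \<otimes> y"] xy by simp
      also have "\<dots> = inv y \<otimes> inv x" using inv_mult_group xy by blast
      also have "\<dots> = y \<otimes> x" using invs xy by simp
      finally show ?thesis .
    qed
    show ?thesis
    proof (cases "\<forall>g\<in>carrier G. g = \<one>")
      case True
      have "\<forall>g\<in>carrier G. \<exists>i<(4::nat). \<exists>e<(2::nat). g = \<one> [^] i \<otimes> \<one> [^] e"
      proof
        fix g assume "g \<in> carrier G"
        then have "g = \<one> [^] (0::nat) \<otimes> \<one> [^] (0::nat)" using True by simp
        moreover have "(0::nat) < 4" "(0::nat) < 2" by simp_all
        ultimately show "\<exists>i<(4::nat). \<exists>e<(2::nat). g = \<one> [^] i \<otimes> \<one> [^] e" by blast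
      qed
      moreover have "\<one> [^] (4::nat) = \<one>" "\<one> \<otimes> \<one> = \<one>" "\<one> \<otimes> \<one> = \<one> [^] (3::nat) \<otimes> \<one>" by simp_all
      ultimately show ?thesis using one_closed by blast
    next
      case False
      then obtain a where a: "a \<in> carrier G" "a \<noteq> \<one>" by blast
      show ?thesis
      proof (cases "\<forall>g\<in>carrier G. g = \<one> \<or> g = a")
        case True
        have "\<forall>g\<in>carrier G. \<exists>i<(4::nat). \<exists>e<(2::nat). g = \<one> [^] i \<otimes> a [^] e"
        proof
          fix g assume "g \<in> carrier G"
          then have "g = \<one> [^] (0::nat) \<otimes> a [^] (0::nat) \<or> g = \<one> [^] (0::nat) \<otimes> a [^] (1::nat)"
            using True a by auto
          then show "\<exists>i<(4::nat). \<exists>e<(2::nat). g = \<one> [^] i \<otimes> a [^] e" using lt by blast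
        qed
        moreover have "a \<otimes> \<one> = \<one> [^] (3::nat) \<otimes> a" using a by simp
        moreover have "\<one> [^] (4::nat) = \<one>" by simp
        moreover have "a \<otimes> a = \<one>" using sq a by blast
        ultimately show ?thesis using a(1) one_closed by blast
      next
        case False
        then obtain b where b: "b \<in> carrier G" "b \<noteq> \<one>" "b \<noteq> a" by blast
        show ?thesis
        proof (cases "\<forall>g\<in>carrier G. g = \<one> \<or> g = a \<or> g = b \<or> g = a \<otimes> b")
          case True
          have "\<forall>g\<in>carrier G. \<exists>i<(4::nat). \<exists>e<(2::nat). g = a [^] i \<otimes> b [^] e"
          proof
            fix g assume "g \<in> carrier G"
            then have "g = a [^] (0::nat) \<otimes> b [^] (0::nat) \<or> g = a [^] (1::nat) \<otimes> b [^] (0::nat) \<or>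
                g = a [^] (0::nat) \<otimes> b [^] (1::nat) \<or> g = a [^] (1::nat) \<otimes> b [^] (1::nat)"
              using True a b by auto
            then show "\<exists>i<(4::nat). \<exists>e<(2::nat). g = a [^] i \<otimes> b [^] e" using lt by blast
          qed
          moreover have "b \<otimes> a = a [^] (3::nat) \<otimes> b"
            using a b sq comm by (simp add: pw3)
          moreover have "a [^] (4::nat) = \<one>" using P4 a by blast
          ultimately show ?thesis using a b sq by blast
        next
          case False
          then obtain c where c: "c \<in> carrier G" "c \<noteq> \<one>" "c \<noteq> a" "c \<noteq> b" "c \<noteq> a \<otimes> b" by blast
          have mv: "w = v \<otimes> u" if uvw: "u \<in> carrier G" "v \<in> carrier G" "w \<in> carrier G" "u = v \<otimes> w" for u v w
          proof -
            have "v \<otimes> u = (v \<otimes> v) \<otimes> w" using uvw by (simp add: m_assoc)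
            then show ?thesis using sq uvw by simp
          qed
          have ab: "a \<otimes> b = b \<otimes> a" "a \<otimes> c = c \<otimes> a" "b \<otimes> c = c \<otimes> b" using comm a b c by auto
          have p1: "a \<noteq> b \<otimes> c"
          proof
            assume "a = b \<otimes> c" then have "c = b \<otimes> a" using mv[of a b c] a b c by blast
            then show False using c ab by simp
          qed
          have p2: "b \<noteq> a \<otimes> c"
          proof
            assume "b = a \<otimes> c" then have "c = a \<otimes> b" using mv[of b a c] a b c by blast
            then show False using c ab by simp
          qed
          have prods: "a \<noteq> b \<otimes> c" "a \<noteq> c \<otimes> b" "b \<noteq> a \<otimes> c" "b \<noteq> c \<otimes> a" "c \<noteq> b \<otimes> a"
            using p1 p2 ab c by auto
          define x where "x n = (if n = (1::nat) then a else if n = 2 then b else c)" for n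
          have xc: "\<forall>i\<in>{1,2,3}. x i \<in> carrier G" unfolding x_def using a b c by auto
          have key: "x p \<noteq> \<one> \<and> x p \<noteq> x q \<and> x p \<noteq> x q \<otimes> x r \<and> x p \<otimes> x q \<noteq> \<one> \<and> x p \<otimes> x q \<noteq> x q \<otimes> x r"
            if "p \<in> {1,2,3}" "q \<in> {1,2,3}" "r \<in> {1,2,3}" "p \<noteq> q" "p \<noteq> r" "q \<noteq> r" for p q r
          proof -
            have base: "x p \<noteq> \<one> \<and> x p \<noteq> x q \<and> x p \<noteq> x q \<otimes> x r \<and> x p \<noteq> x r"
              using that a b c prods unfolding x_def by auto
            have cp: "x p \<in> carrier G" "x q \<in> carrier G" "x r \<in> carrier G" using xc that by auto
            have "x p \<otimes> x q \<noteq> \<one>"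
            proof
              assume "x p \<otimes> x q = \<one>"
              then have "inv (x q) = x p" using cp by (intro inv_equality) simp_all
              then have "x p = inv (x q)" by simp
              then show False using base invs cp by simp
            qed
            moreover have "x p \<otimes> x q \<noteq> x q \<otimes> x r"
            proof
              assume "x p \<otimes> x q = x q \<otimes> x r"
              then have "x q \<otimes> x p = x q \<otimes> x r" using comm[OF cp(1,2)] by simp
              then have "x p = x r" using cp by simp
              then show False using base by blast
            qed
            ultimately show ?thesis using base by blast
          qed
          have cyc: "\<And>u v. v \<in> carrier G \<Longrightarrow> in_cyc G u v \<longleftrightarrow> u = \<one> \<or> u = v"
            using cyc_inv[OF sq] by blast
          have "(\<exists>i\<in>{1,2,3}. \<exists>j\<in>{1,2,3}. i \<noteq> j \<and> in_cyc G (x i) (x j))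
            \<or> (\<exists>\<sigma>. \<sigma> permutes {1,2,3::nat} \<and> in_cyc G (x (\<sigma> 1)) (x (\<sigma> 2) \<otimes> x (\<sigma> 3)))
            \<or> (\<exists>\<sigma>. \<sigma> permutes {1,2,3::nat} \<and> in_cyc G (x (\<sigma> 1) \<otimes> x (\<sigma> 2)) (x (\<sigma> 2) \<otimes> x (\<sigma> 3)))"
            using d4 xc unfolding sat_d4_def by blast
          then show ?thesis
          proof (elim disjE exE conjE bexE)
            fix i j assume ij: "i \<in> {1,2,3}" "j \<in> {1,2,3}" "i \<noteq> j" "in_cyc G (x i) (x j)"
            have ne: "x i \<noteq> \<one>" "x i \<noteq> x j" using ij(1-3) a b c unfolding x_def by auto
            have "x j \<in> carrier G" using xc ij(2) by blast
            then have "x i = \<one> \<or> x i = x j" using cyc ij(4) by blast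
            then show ?thesis using ne by blast
          next
            fix \<sigma> assume s: "\<sigma> permutes {1,2,3::nat}" and h: "in_cyc G (x (\<sigma> 1)) (x (\<sigma> 2) \<otimes> x (\<sigma> 3))"
            have im: "\<sigma> 1 \<in> {1,2,3}" "\<sigma> 2 \<in> {1,2,3}" "\<sigma> 3 \<in> {1,2,3}" using permutes_in_image[OF s] by auto
            have dd: "\<sigma> 1 \<noteq> \<sigma> 2" "\<sigma> 1 \<noteq> \<sigma> 3" "\<sigma> 2 \<noteq> \<sigma> 3"
              by (simp_all add: inj_eq[OF permutes_inj[OF s]])
            have c2: "x (\<sigma> 2) \<in> carrier G" using xc im(2) by blast
            have c3: "x (\<sigma> 3) \<in> carrier G" using xc im(3) by blast
            have "x (\<sigma> 2) \<otimes> x (\<sigma> 3) \<in> carrier G" using c2 c3 by simp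
            then have "x (\<sigma> 1) = \<one> \<or> x (\<sigma> 1) = x (\<sigma> 2) \<otimes> x (\<sigma> 3)" using cyc h by blast
            then show ?thesis using key[OF im dd] by blast
          next
            fix \<sigma> assume s: "\<sigma> permutes {1,2,3::nat}" and h: "in_cyc G (x (\<sigma> 1) \<otimes> x (\<sigma> 2)) (x (\<sigma> 2) \<otimes> x (\<sigma> 3))"
            have im: "\<sigma> 1 \<in> {1,2,3}" "\<sigma> 2 \<in> {1,2,3}" "\<sigma> 3 \<in> {1,2,3}" using permutes_in_image[OF s] by auto
            have dd: "\<sigma> 1 \<noteq> \<sigma> 2" "\<sigma> 1 \<noteq> \<sigma> 3" "\<sigma> 2 \<noteq> \<sigma> 3"
              by (simp_all add: inj_eq[OF permutes_inj[OF s]])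
            have c2: "x (\<sigma> 2) \<in> carrier G" using xc im(2) by blast
            have c3: "x (\<sigma> 3) \<in> carrier G" using xc im(3) by blast
            have "x (\<sigma> 2) \<otimes> x (\<sigma> 3) \<in> carrier G" using c2 c3 by simp
            then have "x (\<sigma> 1) \<otimes> x (\<sigma> 2) = \<one> \<or> x (\<sigma> 1) \<otimes> x (\<sigma> 2) = x (\<sigma> 2) \<otimes> x (\<sigma> 3)" using cyc h by blast
            then show ?thesis using key[OF im dd] by blast
          qed
        qed
      qed
    qed
  qed
qed

end

theorem proposition1:
  fixes G :: "('a, 'b) monoid_scheme"
  shows "(group D8 \<and> sat_basis D8) \<and> (group G \<and> sat_basis G \<longrightarrow> is_section_of G D8)"
proof (intro conjI impI)
  show "group D8" "sat_basis D8" using D8_part by blast+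
  assume h: "group G \<and> sat_basis G"
  then have gG: "group G" and d1: "sat_d1 G" and d2: "sat_d2 G" and d3: "sat_d3 G" and d4: "sat_d4 G"
    unfolding sat_basis_def by blast+
  let ?phi = "\<lambda>(i, e). a [^]\<^bsub>G\<^esub> (i::nat) \<otimes>\<^bsub>G\<^esub> b [^]\<^bsub>G\<^esub> (e::nat)"
  from group.classify[OF gG d1 d2 d3 d4] show "is_section_of G D8"
  proof (elim disjE bexE conjE)
    fix a b assume a: "a \<in> carrier G" and b: "b \<in> carrier G" and a4: "a [^]\<^bsub>G\<^esub> (4::nat) = \<one>\<^bsub>G\<^esub>"
      and bb: "b \<otimes>\<^bsub>G\<^esub> b = \<one>\<^bsub>G\<^esub>" and rel: "b \<otimes>\<^bsub>G\<^esub> a = a [^]\<^bsub>G\<^esub> (3::nat) \<otimes>\<^bsub>G\<^esub> b"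
      and sj: "\<forall>g\<in>carrier G. \<exists>i<(4::nat). \<exists>e<(2::nat). g = a [^]\<^bsub>G\<^esub> i \<otimes>\<^bsub>G\<^esub> b [^]\<^bsub>G\<^esub> e"
    let ?f = "\<lambda>(i, e). a [^]\<^bsub>G\<^esub> (i::nat) \<otimes>\<^bsub>G\<^esub> b [^]\<^bsub>G\<^esub> (e::nat)"
    have hom: "?f \<in> hom (D8\<lparr>carrier := carrier D8\<rparr>) G"
      using group.phi_hom[OF gG a b a4 bb subset_refl] rel by blast
    have "?f ` carrier D8 = carrier G"
    proof
      show "?f ` carrier D8 \<subseteq> carrier G"
        using a b gG by (auto simp: group.is_monoid monoid.nat_pow_closed monoid.m_closed)
      show "carrier G \<subseteq> ?f ` carrier D8"
      proof
        fix g assume "g \<in> carrier G"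
        then obtain i e :: nat where "i < 4" "e < 2" "g = a [^]\<^bsub>G\<^esub> i \<otimes>\<^bsub>G\<^esub> b [^]\<^bsub>G\<^esub> e" using sj by blast
        then show "g \<in> ?f ` carrier D8" unfolding carrier_D8' by force
      qed
    qed
    then show ?thesis
      using section_from_hom[OF gG group.subgroup_self[OF group_D8] hom] by blast
  next
    fix a assume a: "a \<in> carrier G" and a4: "a [^]\<^bsub>G\<^esub> (4::nat) = \<one>\<^bsub>G\<^esub>"
      and sj: "\<forall>g\<in>carrier G. \<exists>i<(4::nat). g = a [^]\<^bsub>G\<^esub> i"
    let ?K = "{(i::nat, e::nat). i < 4 \<and> e = 0}"
    let ?f = "\<lambda>(i, e). a [^]\<^bsub>G\<^esub> (i::nat) \<otimes>\<^bsub>G\<^esub> \<one>\<^bsub>G\<^esub> [^]\<^bsub>G\<^esub> (e::nat)"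
    have one: "\<one>\<^bsub>G\<^esub> \<in> carrier G" "\<one>\<^bsub>G\<^esub> \<otimes>\<^bsub>G\<^esub> \<one>\<^bsub>G\<^esub> = \<one>\<^bsub>G\<^esub>"
      using gG by (simp_all add: group.is_monoid monoid.one_closed monoid.l_one)
    have Ksub: "?K \<subseteq> carrier D8" by (auto simp: carrier_D8')
    have hom: "?f \<in> hom (D8\<lparr>carrier := ?K\<rparr>) G"
      using group.phi_hom[OF gG a one(1) a4 one(2) Ksub] by auto
    have "?f ` ?K = carrier G"
    proof
      show "?f ` ?K \<subseteq> carrier G"
        using a one gG by (auto simp: group.is_monoid monoid.nat_pow_closed monoid.m_closed)
      show "carrier G \<subseteq> ?f ` ?K"
      proof
        fix g assume "g \<in> carrier G"
        then obtain i :: nat where i: "i < 4" "g = a [^]\<^bsub>G\<^esub> i" using sj by blast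
        then have "g = ?f (i, 0)" using gG a by (simp add: group.is_monoid monoid.nat_pow_closed monoid.r_one)
        then show "g \<in> ?f ` ?K" using i by force
      qed
    qed
    then show ?thesis
      using section_from_hom[OF gG subgroup_K4 hom] by blast
  qed
qed

end
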